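(* Let $1\le p\le n$, $\beta>0$, let $f:\mathbb{R}^{n\times p}\to\mathbb{R}$ be smooth, and let $X\in\mathbb{R}^{n\times p}_*$. Let $\mathrm{T}_X\mathrm{St}_{X^\top X}=\{\xi\in\mathbb{R}^{n\times p}\mid \xi^\top X+X^\top\xi=0\}$ be the tangent space at $X$ of $\mathrm{St}_{X^\top X}=\{Y\in\mathbb{R}^{n\times p}\mid Y^\top Y=X^\top X\}$. Let $\mathrm{grad}_\beta f(X)$ be the constrained Riemannian gradient, i.e., the unique $\mathrm{grad}_\beta f(X)\in\mathrm{T}_X\mathrm{St}_{X^\top X}$ such that $\mathrm{D}f(X)[\xi]=g^\beta_X(\xi,\mathrm{grad}_\beta f(X))$ for all $\xi\in\mathrm{T}_X\mathrm{St}_{X^\top X}$. Then $\mathrm{grad}_\beta f(X)=\mathrm{Proj}_{X,\beta}(\nabla_\beta f(X))$ and \[\mathrm{grad}_\beta f(X)=\nabla_{\mathrm E}f(X)X^\top X-\frac{1}{2\beta}X\nabla_{\mathrm E}f(X)^\top X+\Big(\frac{1}{2\beta}-1\Big)X(X^\top X)^{-1}X^\top\nabla_{\mathrm E}f(X)X^\top X.\] In particular, for $\beta=\tfrac12$, \[\mathrm{grad}_{1/2} f(X)=\nabla_{\mathrm E}f(X)X^\top X-X\nabla_{\mathrm E}f(X)^\top X=2\operatorname{skew}\big(\nabla_{\mathrm E}f(X)X^\top\big)X.\]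
   Context: $\mathbb{R}^{n\times p}_*$ denotes the set of full-rank (rank $p$) real $n\times p$ matrices, and $\operatorname{skew}(A)=(A-A^\top)/2$. For $\beta>0$ and $X\in\mathbb{R}^{n\times p}_*$, the $\beta$-metric is the inner product on $\mathbb{R}^{n\times p}$ given by \[g^\beta_X(\xi,\zeta)=\mathrm{trace}\Big(\xi^\top\big(\mathrm{I}_n-(1-\beta)X(X^\top X)^{-1}X^\top\big)\zeta\,(X^\top X)^{-1}\Big),\qquad \xi,\zeta\in\mathbb{R}^{n\times p}.\] $\mathrm{Proj}_{X,\beta}:\mathbb{R}^{n\times p}\to\mathrm{T}_X\mathrm{St}_{X^\top X}$ is the orthogonal projection with respect to $g^\beta_X$ (characterized by $g^\beta_X(\xi,Z-\mathrm{Proj}_{X,\beta}(Z))=0$ for all tangent $\xi$). $\nabla_\beta f(X)$ is the unique element of $\mathbb{R}^{n\times p}$ with $\mathrm{D}f(X)[\xi]=g^\beta_X(\xi,\nabla_\beta f(X))$ for all $\xi\in\mathbb{R}^{n\times p}$, and $\nabla_{\mathrm E}f(X)$ is the Euclidean gradient, with $\mathrm{D}f(X)[\xi]=\mathrm{trace}(\xi^\top\nabla_{\mathrm E}f(X))$. *)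

theory Defs
  imports "HOL-Analysis.Analysis"
begin

type_synonym ('n,'p) mat = "real^'p^'n"   (* n x p real matrix: 'n rows, 'p columns *)

fun Ck :: "nat \<Rightarrow> ('a::euclidean_space \<Rightarrow> real) \<Rightarrow> bool" where
  "Ck 0 f = continuous_on UNIV f"
| "Ck (Suc k) f = ((\<forall>Y. f differentiable (at Y)) \<and>
                     (\<forall>v. Ck k (\<lambda>Y. frechet_derivative f (at Y) v)))"

definition smooth :: "('a::euclidean_space \<Rightarrow> real) \<Rightarrow> bool" where
  "smooth f = (\<forall>k. Ck k f)"

definition full_rank :: "real^'p^'n \<Rightarrow> bool" where
  "full_rank X = (rank X = CARD('p))"

definition gbeta :: "real \<Rightarrow> real^'p^'n \<Rightarrow> real^'p^'n \<Rightarrow> real^'p^'n \<Rightarrow> real" where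
  "gbeta \<beta> X \<xi> \<zeta> =
     trace (transpose \<xi> **
            (mat 1 - (1 - \<beta>) *\<^sub>R (X ** matrix_inv (transpose X ** X) ** transpose X)) **
            \<zeta> ** matrix_inv (transpose X ** X))"

definition tangent_space :: "real^'p^'n \<Rightarrow> (real^'p^'n) set" where
  "tangent_space X = {\<xi>. transpose \<xi> ** X + transpose X ** \<xi> = 0}"

definition egrad :: "(real^'p^'n \<Rightarrow> real) \<Rightarrow> real^'p^'n \<Rightarrow> real^'p^'n" where
  "egrad f X = (THE G. \<forall>\<xi>. frechet_derivative f (at X) \<xi> = trace (transpose \<xi> ** G))"

definition nabla_beta :: "real \<Rightarrow> (real^'p^'n \<Rightarrow> real) \<Rightarrow> real^'p^'n \<Rightarrow> real^'p^'n" where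
  "nabla_beta \<beta> f X = (THE G. \<forall>\<xi>. frechet_derivative f (at X) \<xi> = gbeta \<beta> X \<xi> G)"

definition Proj :: "real \<Rightarrow> real^'p^'n \<Rightarrow> real^'p^'n \<Rightarrow> real^'p^'n" where
  "Proj \<beta> X Z = (THE W. W \<in> tangent_space X \<and>
                     (\<forall>\<xi>\<in>tangent_space X. gbeta \<beta> X \<xi> (Z - W) = 0))"

definition grad_beta :: "real \<Rightarrow> (real^'p^'n \<Rightarrow> real) \<Rightarrow> real^'p^'n \<Rightarrow> real^'p^'n" where
  "grad_beta \<beta> f X = (THE G. G \<in> tangent_space X \<and>
       (\<forall>\<xi>\<in>tangent_space X. frechet_derivative f (at X) \<xi> = gbeta \<beta> X \<xi> G))"

definition skew :: "real^'n^'n \<Rightarrow> real^'n^'n" where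
  "skew A = (1/2) *\<^sub>R (A - transpose A)"

end

theory Submission imports Defs begin

lemma mm_scaleR_left: "((c::real) *\<^sub>R (A::real^'n^'m)) ** (B::real^'p^'n) = c *\<^sub>R (A ** B)"
  by (simp add: matrix_matrix_mult_def vec_eq_iff sum_distrib_left mult.assoc)
lemma mm_scaleR_right: "(A::real^'n^'m) ** ((c::real) *\<^sub>R (B::real^'p^'n)) = c *\<^sub>R (A ** B)"
  by (simp add: matrix_matrix_mult_def vec_eq_iff sum_distrib_left mult.left_commute)
lemma mm_add_rdistrib: "((A::real^'n^'m) + B) ** (C::real^'p^'n) = A ** C + B ** C"
  by (simp add: matrix_matrix_mult_def vec_eq_iff sum.distrib distrib_right)
lemma mm_diff_rdistrib: "((A::real^'n^'m) - B) ** (C::real^'p^'n) = A ** C - B ** C"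
  by (simp add: matrix_matrix_mult_def vec_eq_iff sum_subtractf left_diff_distrib)
lemma mm_diff_ldistrib: "(A::real^'n^'m) ** ((B::real^'p^'n) - C) = A ** B - A ** C"
  by (simp add: matrix_matrix_mult_def vec_eq_iff sum_subtractf right_diff_distrib)
lemma transpose_add': "transpose ((A::real^'n^'m) + B) = transpose A + transpose B"
  by (simp add: transpose_def vec_eq_iff)
lemma transpose_diff': "transpose ((A::real^'n^'m) - B) = transpose A - transpose B"
  by (simp add: transpose_def vec_eq_iff)
lemma trace_scaleR': "trace ((c::real) *\<^sub>R (A::real^'n^'n)) = c * trace A"
  by (simp add: trace_def sum_distrib_left)
lemma trace_transpose': "trace (transpose (A::real^'n^'n)) = trace A"
  by (simp add: trace_def transpose_def)
lemma trace_inner: "trace (transpose (A::real^'p^'n) ** B) = A \<bullet> B"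
  unfolding trace_def matrix_matrix_mult_def transpose_def inner_vec_def
  apply simp
  apply (subst sum.swap)
  apply (simp add: mult.commute)
  done

lemma mm_neg_left: "(- (A::real^'n^'m)) ** (B::real^'p^'n) = - (A ** B)"
  by (simp add: matrix_matrix_mult_def vec_eq_iff sum_negf)
lemma transpose_neg': "transpose (- (A::real^'n^'m)) = - transpose A"
  by (simp add: transpose_def vec_eq_iff)


lemmas alg = matrix_mul_assoc mm_add_rdistrib matrix_add_ldistrib mm_diff_rdistrib mm_diff_ldistrib
  mm_scaleR_left mm_scaleR_right mm_neg_left matrix_transpose_mul transpose_add' transpose_diff'
  transpose_scalar transpose_neg'

context
  fixes X :: "real^'p^'n"
  assumes fr: "full_rank X"
begin

lemma M_inj: "inj ((*v) (transpose X ** X))"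
proof -
  have injX: "inj ((*v) X)" using fr full_rank_injective unfolding full_rank_def by blast
  have "v = 0" if "(transpose X ** X) *v v = 0" for v
  proof -
    have "(X *v v) \<bullet> (X *v v) = v \<bullet> ((transpose X ** X) *v v)"
      by (metis dot_lmul_matrix vector_transpose_matrix matrix_vector_mul_assoc)
    then have "X *v v = 0" using that by simp
    then show ?thesis using injX by (metis inj_eq matrix_vector_mult_0_right)
  qed
  then show ?thesis by (metis matrix_left_invertible_injective matrix_left_invertible_ker)
qed

lemma M_inv: "invertible (transpose X ** X)"
  using M_inj matrix_left_invertible_injective invertible_left_inverse by blast

lemma MN: "(transpose X ** X) ** matrix_inv (transpose X ** X) = mat 1"
  and NM: "matrix_inv (transpose X ** X) ** (transpose X ** X) = mat 1"
  using M_inv unfolding invertible_def matrix_inv_def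
  by (metis (mono_tags, lifting) someI_ex)+

lemma N_sym: "transpose (matrix_inv (transpose X ** X)) = matrix_inv (transpose X ** X)"
proof -
  let ?M = "transpose X ** X" and ?N = "matrix_inv (transpose X ** X)"
  have 1: "transpose ?N ** ?M = mat 1"
    using MN by (metis matrix_transpose_mul transpose_mat transpose_transpose)
  have "transpose ?N = transpose ?N ** (?M ** ?N)" using MN by simp
  also have "\<dots> = ?N" using 1 by (simp add: matrix_mul_assoc)
  finally show ?thesis .
qed

abbreviation "NN \<equiv> matrix_inv (transpose X ** X)"
abbreviation "AA \<beta> \<equiv> mat 1 - (1 - \<beta>) *\<^sub>R (X ** NN ** transpose X)"

lemma MN1: "transpose X ** X ** NN = mat 1" using MN by simp
lemma MN2: "(Y::real^'p^'k) ** transpose X ** X ** NN = Y"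
  using MN by (metis matrix_mul_assoc matrix_mul_rid)
lemma NM1: "NN ** transpose X ** X = mat 1" using NM by (simp add: matrix_mul_assoc)
lemma NM2: "(Y::real^'p^'k) ** NN ** transpose X ** X = Y"
  using NM by (metis matrix_mul_assoc matrix_mul_rid)

lemmas red = MN1 MN2 NM1 NM2 N_sym

lemma gbeta_inner: "gbeta \<beta> X \<xi> \<zeta> = \<xi> \<bullet> (AA \<beta> ** \<zeta> ** NN)"
  unfolding gbeta_def trace_inner[symmetric] by (simp add: matrix_mul_assoc)

lemma G0_tangent:
  "transpose (E ** (transpose X ** X) - c *\<^sub>R (X ** transpose E ** X)
     + (c - 1) *\<^sub>R (X ** NN ** transpose X ** E ** (transpose X ** X))) ** X
   + transpose X ** (E ** (transpose X ** X) - c *\<^sub>R (X ** transpose E ** X)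
     + (c - 1) *\<^sub>R (X ** NN ** transpose X ** E ** (transpose X ** X))) = 0"
  by (simp add: alg red algebra_simps)

lemma G0_main:
  assumes b: "\<beta> > 0"
  shows "AA \<beta> ** (E ** (transpose X ** X) - (1/(2*\<beta>)) *\<^sub>R (X ** transpose E ** X)
     + (1/(2*\<beta>) - 1) *\<^sub>R (X ** NN ** transpose X ** E ** (transpose X ** X))) ** NN
   = E - (1/2) *\<^sub>R (X ** NN ** transpose X ** E + X ** transpose E ** X ** NN)"
proof -
  define c where "c = 1/(2*\<beta>)"
  have "AA \<beta> ** (E ** (transpose X ** X) - c *\<^sub>R (X ** transpose E ** X)
     + (c - 1) *\<^sub>R (X ** NN ** transpose X ** E ** (transpose X ** X))) ** NN
     = E + ((c - 1) - (1 - \<beta>) - (1 - \<beta>) * (c - 1)) *\<^sub>R (X ** NN ** transpose X ** E)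
         + ((1 - \<beta>) * c - c) *\<^sub>R (X ** transpose E ** X ** NN)"
    by (simp add: alg red algebra_simps)
  moreover have c1: "(c - 1) - (1 - \<beta>) - (1 - \<beta>) * (c - 1) = - 1/2" "(1 - \<beta>) * c - c = -1/2"
    using b unfolding c_def by (simp_all add: field_simps)
  ultimately have eq: "AA \<beta> ** (E ** (transpose X ** X) - c *\<^sub>R (X ** transpose E ** X)
     + (c - 1) *\<^sub>R (X ** NN ** transpose X ** E ** (transpose X ** X))) ** NN
     = E + (- 1/2) *\<^sub>R (X ** NN ** transpose X ** E) + (- 1/2) *\<^sub>R (X ** transpose E ** X ** NN)"
    by simp
  also have "E + (- 1/2) *\<^sub>R (X ** NN ** transpose X ** E) + (- 1/2) *\<^sub>R (X ** transpose E ** X ** NN)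
     = E - (1/2) *\<^sub>R (X ** NN ** transpose X ** E + X ** transpose E ** X ** NN)"
    by (simp add: algebra_simps)
  finally show ?thesis unfolding c_def .
qed

lemma tangent_cancel:
  assumes "\<xi> \<in> tangent_space X"
  shows "\<xi> \<bullet> (X ** NN ** transpose X ** E) + \<xi> \<bullet> (X ** transpose E ** X ** NN) = 0"
proof -
  define K where "K = transpose \<xi> ** X"
  have K: "transpose X ** \<xi> = - K" using assms unfolding tangent_space_def K_def
    by (simp add: eq_neg_iff_add_eq_0 add.commute)
  have t1: "\<xi> \<bullet> (X ** NN ** transpose X ** E) = trace (K ** (NN ** transpose X ** E))"
    unfolding trace_inner[symmetric] K_def by (simp add: matrix_mul_assoc)
  have "\<xi> \<bullet> (X ** transpose E ** X ** NN) = trace (transpose (transpose \<xi> ** (X ** transpose E ** X ** NN)))"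
    unfolding trace_inner[symmetric] trace_transpose' ..
  also have "\<dots> = trace ((NN ** transpose X ** E) ** (transpose X ** \<xi>))"
    by (simp add: alg red)
  also have "\<dots> = trace ((transpose X ** \<xi>) ** (NN ** transpose X ** E))"
    by (rule trace_mul_sym)
  also have "\<dots> = - trace (K ** (NN ** transpose X ** E))"
    unfolding K by (simp add: mm_neg_left trace_def sum_negf)
  finally show ?thesis using t1 by simp
qed

lemma definite:
  assumes b: "\<beta> > 0" and z: "D \<bullet> (AA \<beta> ** D ** NN) = 0"
  shows "D = 0"
proof -
  define V where "V = D ** NN ** transpose X"
  define PV where "PV = X ** NN ** transpose X ** V"
  have "trace (transpose V ** AA \<beta> ** V)
      = trace (X ** (NN ** transpose D ** AA \<beta> ** D ** NN ** transpose X))"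
    unfolding V_def by (simp add: alg red)
  also have "\<dots> = trace ((NN ** transpose D ** AA \<beta> ** D ** NN ** transpose X) ** X)"
    by (rule trace_mul_sym)
  also have "\<dots> = trace (NN ** (transpose D ** AA \<beta> ** D))"
    by (simp add: alg red)
  also have "\<dots> = trace ((transpose D ** AA \<beta> ** D) ** NN)"
    by (rule trace_mul_sym)
  also have "\<dots> = D \<bullet> (AA \<beta> ** D ** NN)"
    by (simp add: trace_inner[symmetric] matrix_mul_assoc)
  finally have e1: "trace (transpose V ** AA \<beta> ** V) = D \<bullet> (AA \<beta> ** D ** NN)" .
  have e2: "trace (transpose V ** AA \<beta> ** V)
     = trace (transpose V ** V) - (1 - \<beta>) * trace (transpose V ** X ** NN ** transpose X ** V)"
    by (simp add: alg trace_sub trace_scaleR')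
  have e3: "(V - PV) \<bullet> (V - PV) = trace (transpose V ** V) - trace (transpose V ** X ** NN ** transpose X ** V)"
    unfolding trace_inner[symmetric] PV_def by (simp add: alg red trace_sub trace_add)
  have e4: "PV \<bullet> PV = trace (transpose V ** X ** NN ** transpose X ** V)"
    unfolding trace_inner[symmetric] PV_def by (simp add: alg red)
  have sum0: "(V - PV) \<bullet> (V - PV) + \<beta> * (PV \<bullet> PV) = 0"
    using e1 e2 e3 e4 z by (simp add: algebra_simps)
  have "0 \<le> (V - PV) \<bullet> (V - PV)" "0 \<le> \<beta> * (PV \<bullet> PV)" using b by simp_all
  then have "(V - PV) \<bullet> (V - PV) = 0" "\<beta> * (PV \<bullet> PV) = 0" using sum0 by linarith+
  then have "V - PV = 0" "PV = 0" using b by simp_all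
  then have "V = 0" by simp
  then have "V ** X = 0" by simp
  moreover have "V ** X = D" unfolding V_def by (simp add: red)
  ultimately show ?thesis by simp
qed

lemma gbeta_diff: "gbeta \<beta> X \<xi> (A - B) = gbeta \<beta> X \<xi> A - gbeta \<beta> X \<xi> B"
  unfolding gbeta_inner by (simp add: mm_diff_rdistrib mm_diff_ldistrib inner_diff_right)

lemma uniq_gen:
  assumes b: "\<beta> > 0" and S: "G1 - G2 \<in> S" and h: "\<forall>\<xi>\<in>S. gbeta \<beta> X \<xi> G1 = gbeta \<beta> X \<xi> G2"
  shows "G1 = G2"
proof -
  have "gbeta \<beta> X (G1 - G2) (G1 - G2) = 0" using S h by (simp add: gbeta_diff)
  then have "G1 - G2 = 0" using definite[OF b] unfolding gbeta_inner by blast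
  then show ?thesis by simp
qed

lemma tangent_diff: "A \<in> tangent_space X \<Longrightarrow> B \<in> tangent_space X \<Longrightarrow> A - B \<in> tangent_space X"
proof -
  have "transpose (A - B) ** X + transpose X ** (A - B)
      = (transpose A ** X + transpose X ** A) - (transpose B ** X + transpose X ** B)"
    by (simp add: alg algebra_simps)
  then show "A \<in> tangent_space X \<Longrightarrow> B \<in> tangent_space X \<Longrightarrow> A - B \<in> tangent_space X"
    unfolding tangent_space_def by simp
qed

lemma nabla_exists:
  assumes b: "\<beta> > 0"
  shows "AA \<beta> ** (E ** (transpose X ** X) + ((1 - \<beta>)/\<beta>) *\<^sub>R (X ** NN ** transpose X ** E ** (transpose X ** X))) ** NN = E"
proof -
  define q where "q = (1 - \<beta>)/\<beta>"
  have "AA \<beta> ** (E ** (transpose X ** X) + q *\<^sub>R (X ** NN ** transpose X ** E ** (transpose X ** X))) ** NN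
      = E + (q - (1 - \<beta>) - (1 - \<beta>) * q) *\<^sub>R (X ** NN ** transpose X ** E)"
    by (simp add: alg red algebra_simps)
  moreover have "q - (1 - \<beta>) - (1 - \<beta>) * q = 0" using b unfolding q_def by (simp add: field_simps)
  ultimately show ?thesis unfolding q_def by simp
qed

lemma main:
  assumes b: "\<beta> > 0" and L: "\<forall>\<xi>. L \<xi> = \<xi> \<bullet> E"
    and G0: "G0 = E ** (transpose X ** X) - (1 / (2 * \<beta>)) *\<^sub>R (X ** transpose E ** X)
        + (1 / (2 * \<beta>) - 1) *\<^sub>R (X ** NN ** transpose X ** E ** (transpose X ** X))"
  shows "(\<exists>!G. G \<in> tangent_space X \<and> (\<forall>\<xi>\<in>tangent_space X. L \<xi> = gbeta \<beta> X \<xi> G))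
     \<and> (THE G. G \<in> tangent_space X \<and> (\<forall>\<xi>\<in>tangent_space X. L \<xi> = gbeta \<beta> X \<xi> G)) = G0
     \<and> (THE W. W \<in> tangent_space X \<and> (\<forall>\<xi>\<in>tangent_space X.
          gbeta \<beta> X \<xi> ((THE G. \<forall>\<xi>. L \<xi> = gbeta \<beta> X \<xi> G) - W) = 0)) = G0"
proof -
  let ?T = "tangent_space X"
  have G0T: "G0 \<in> ?T" unfolding tangent_space_def G0 using G0_tangent[of E "1/(2*\<beta>)"] by simp
  have G0P: "\<forall>\<xi>\<in>?T. L \<xi> = gbeta \<beta> X \<xi> G0"
  proof
    fix \<xi> assume "\<xi> \<in> ?T"
    from tangent_cancel[OF this, of E] show "L \<xi> = gbeta \<beta> X \<xi> G0"
      unfolding gbeta_inner G0 G0_main[OF b] by (simp add: inner_diff_right inner_add_right L)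
  qed
  have uT: "G = G0" if "G \<in> ?T" "\<forall>\<xi>\<in>?T. L \<xi> = gbeta \<beta> X \<xi> G" for G
  proof (rule uniq_gen[OF b])
    show "G - G0 \<in> ?T" using that(1) G0T by (rule tangent_diff)
    show "\<forall>\<xi>\<in>?T. gbeta \<beta> X \<xi> G = gbeta \<beta> X \<xi> G0" using that(2) G0P by metis
  qed
  have ex1: "\<exists>!G. G \<in> ?T \<and> (\<forall>\<xi>\<in>?T. L \<xi> = gbeta \<beta> X \<xi> G)"
    using G0T G0P uT by blast
  have the1: "(THE G. G \<in> ?T \<and> (\<forall>\<xi>\<in>?T. L \<xi> = gbeta \<beta> X \<xi> G)) = G0"
    by (rule the1_equality[OF ex1]) (use G0T G0P in blast)
  define Z0 where "Z0 = E ** (transpose X ** X) + ((1 - \<beta>)/\<beta>) *\<^sub>R (X ** NN ** transpose X ** E ** (transpose X ** X))"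
  have Z0P: "\<forall>\<xi>. L \<xi> = gbeta \<beta> X \<xi> Z0"
    unfolding gbeta_inner Z0_def nabla_exists[OF b] using L by simp
  have Z: "(THE G. \<forall>\<xi>. L \<xi> = gbeta \<beta> X \<xi> G) = Z0"
  proof (rule the_equality)
    show "\<forall>\<xi>. L \<xi> = gbeta \<beta> X \<xi> Z0" by (rule Z0P)
    fix G assume "\<forall>\<xi>. L \<xi> = gbeta \<beta> X \<xi> G"
    then show "G = Z0" using uniq_gen[OF b, of G Z0 UNIV] Z0P by (metis UNIV_I)
  qed
  have proj: "(THE W. W \<in> ?T \<and> (\<forall>\<xi>\<in>?T. gbeta \<beta> X \<xi> (Z0 - W) = 0)) = G0"
  proof (rule the_equality)
    show "G0 \<in> ?T \<and> (\<forall>\<xi>\<in>?T. gbeta \<beta> X \<xi> (Z0 - G0) = 0)"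
      using G0T G0P Z0P by (metis gbeta_diff diff_self)
    fix W assume W: "W \<in> ?T \<and> (\<forall>\<xi>\<in>?T. gbeta \<beta> X \<xi> (Z0 - W) = 0)"
    then have "\<forall>\<xi>\<in>?T. L \<xi> = gbeta \<beta> X \<xi> W" using Z0P by (metis gbeta_diff eq_iff_diff_eq_0)
    then show "W = G0" using uT W by blast
  qed
  show ?thesis using ex1 the1 proj unfolding Z by blast
qed

end

theorem proposition6:
  fixes f :: "real^'p^'n \<Rightarrow> real" and X :: "real^'p^'n" and \<beta> :: real
  assumes "CARD('p) \<le> CARD('n)"
    and "\<beta> > 0"
    and "smooth f"
    and "full_rank X"
  shows "(\<exists>!G. G \<in> tangent_space X \<and>
            (\<forall>\<xi>\<in>tangent_space X. frechet_derivative f (at X) \<xi> = gbeta \<beta> X \<xi> G))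
    \<and> grad_beta \<beta> f X = Proj \<beta> X (nabla_beta \<beta> f X)
    \<and> grad_beta \<beta> f X =
        egrad f X ** (transpose X ** X)
        - (1 / (2 * \<beta>)) *\<^sub>R (X ** transpose (egrad f X) ** X)
        + (1 / (2 * \<beta>) - 1) *\<^sub>R
            (X ** matrix_inv (transpose X ** X) ** transpose X ** egrad f X ** (transpose X ** X))
    \<and> grad_beta (1/2) f X = egrad f X ** (transpose X ** X) - X ** transpose (egrad f X) ** X
    \<and> grad_beta (1/2) f X = 2 *\<^sub>R (skew (egrad f X ** transpose X) ** X)"
proof -
  let ?L = "frechet_derivative f (at X)"
  have "Ck (Suc 0) f" using assms(3) unfolding smooth_def by blast
  then have "f differentiable (at X)" by simp
  then have lin: "linear ?L" using frechet_derivative_works has_derivative_linear by blast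
  define E0 where "E0 = adjoint ?L 1"
  have LE0: "\<forall>\<xi>. ?L \<xi> = \<xi> \<bullet> E0"
    unfolding E0_def using adjoint_works[OF lin] by simp
  have egr: "egrad f X = E0"
    unfolding egrad_def trace_inner
  proof (rule the_equality)
    show "\<forall>\<xi>. ?L \<xi> = \<xi> \<bullet> E0" by (rule LE0)
    fix G assume "\<forall>\<xi>. ?L \<xi> = \<xi> \<bullet> G"
    then have "(G - E0) \<bullet> (G - E0) = 0" using LE0 by (metis inner_diff_left inner_diff_right diff_self)
    then show "G = E0" by simp
  qed
  have LE: "\<forall>\<xi>. ?L \<xi> = \<xi> \<bullet> egrad f X" using LE0 egr by simp
  note m1 = main[OF assms(4) assms(2) LE refl]
  note m2 = main[OF assms(4) _ LE refl, of "1/2"]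
  have g2: "grad_beta (1/2) f X = egrad f X ** (transpose X ** X) - X ** transpose (egrad f X) ** X"
    using m2 unfolding grad_beta_def by simp
  moreover have "2 *\<^sub>R (skew (egrad f X ** transpose X) ** X)
      = egrad f X ** (transpose X ** X) - X ** transpose (egrad f X) ** X"
    by (simp add: skew_def alg)
  ultimately show ?thesis using m1 unfolding grad_beta_def Proj_def nabla_beta_def by simp
qed

end
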